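(* Let $M_1$ and $M_2$ be MUL-trees on the same set $S$ of labels. If $\Upsilon(M_1)=\Upsilon(M_2)$, then $M_1\cong M_2$. In particular, $m(M_1,M_2)=\frac12|\Upsilon(M_1)\bigtriangleup\Upsilon(M_2)|$ is a metric on the class of all MUL-trees labeled in $S$.
   Context: A MUL-tree (multi-labeled phylogenetic tree) over a finite set $S$ is a finite rooted tree whose leaves are each labeled by a non-empty subset of $S$ (different leaves may share labels). Isomorphism of MUL-trees is isomorphism of rooted trees preserving leaf label sets. The height of a node is the largest length of a path from it to a leaf. The nested label $\ell(v)$ is defined inductively: if $v$ is a leaf with label set $S_v$, $\ell(v)=S_v$; otherwise $\ell(v)$ is the multiset $\{\ell(v_1),\dots,\ell(v_k)\}$ of the nested labels of its children $v_1,\dots,v_k$. $\Upsilon(M)$ is the multiset of nested labels of all nodes of $M$ (each with multiplicity the number of nodes having it); $\bigtriangleup$ is multiset symmetric difference (multiplicity $|M_1(x)-M_2(x)|$) and $|\cdot|$ is the sum of multiplicities. *)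

theory Defs
  imports Complex_Main "HOL-Library.Multiset"
begin

text \<open>MUL-trees: rooted trees represented with (ordered) child lists; the ordering is
  irrelevant, isomorphism below ignores it.\<close>
datatype 'a multree = Leaf "'a set" | Node "'a multree list"

fun mtree_wf :: "'a set \<Rightarrow> 'a multree \<Rightarrow> bool" where
  "mtree_wf S (Leaf A) = (A \<noteq> {} \<and> A \<subseteq> S)"
| "mtree_wf S (Node ts) = (ts \<noteq> [] \<and> (\<forall>t\<in>set ts. mtree_wf S t))"

inductive mtree_iso :: "'a multree \<Rightarrow> 'a multree \<Rightarrow> bool" where
  iso_leaf: "mtree_iso (Leaf A) (Leaf A)"
| iso_node: "mset us' = mset us \<Longrightarrow> list_all2 mtree_iso ts us' \<Longrightarrow> mtree_iso (Node ts) (Node us)"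

datatype 'a nlabel = NLeaf "'a set" | NNode "'a nlabel multiset"

fun nested_label :: "'a multree \<Rightarrow> 'a nlabel" where
  "nested_label (Leaf A) = NLeaf A"
| "nested_label (Node ts) = NNode (mset (map nested_label ts))"

fun Upsilon :: "'a multree \<Rightarrow> 'a nlabel multiset" where
  "Upsilon (Leaf A) = {# NLeaf A #}"
| "Upsilon (Node ts) = {# nested_label (Node ts) #} + sum_list (map Upsilon ts)"

definition msym_diff :: "'b multiset \<Rightarrow> 'b multiset \<Rightarrow> 'b multiset" where
  "msym_diff A B = (A - B) + (B - A)"

definition mul_dist :: "'a multree \<Rightarrow> 'a multree \<Rightarrow> real" where
  "mul_dist M1 M2 = real (size (msym_diff (Upsilon M1) (Upsilon M2))) / 2"

end

theory Submission imports Defs begin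

lemma nsize_lt: "x \<in># M \<Longrightarrow> size x < size (NNode M)"
proof -
  assume "x \<in># M"
  then obtain M' where "M = add_mset x M'" by (metis multi_member_split)
  then show ?thesis by simp
qed

lemma in_sum_list_map: "x \<in># sum_list (map f xs) \<Longrightarrow> \<exists>t\<in>set xs. x \<in># f t"
  by (induction xs) auto

lemma Upsilon_root: "x \<in># Upsilon M \<Longrightarrow> x = nested_label M \<or> size x < size (nested_label M)"
proof (induction M arbitrary: x)
  case (Leaf A) then show ?case by simp
next
  case (Node ts)
  show ?case
  proof (cases "x = nested_label (Node ts)")
    case False
    then have "x \<in># sum_list (map Upsilon ts)" using Node.prems by simp
    then have "\<exists>t\<in>set ts. x \<in># Upsilon t" by (rule in_sum_list_map)
    then obtain t where t: "t \<in> set ts" "x \<in># Upsilon t" by blast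
    have "x = nested_label t \<or> size x < size (nested_label t)" by (rule Node.IH[OF t])
    moreover have "size (nested_label t) < size (nested_label (Node ts))"
    proof -
      have "nested_label t \<in># mset (map nested_label ts)" using t(1) by simp
      then have "size (nested_label t) < size (NNode (mset (map nested_label ts)))"
        by (rule nsize_lt)
      then show ?thesis by simp
    qed
    ultimately show ?thesis by auto
  qed simp
qed

lemma root_in: "nested_label M \<in># Upsilon M"
  by (cases M) auto

lemma Upsilon_eq_root: "Upsilon M1 = Upsilon M2 \<Longrightarrow> nested_label M1 = nested_label M2"
  using Upsilon_root[of "nested_label M1" M2] Upsilon_root[of "nested_label M2" M1]
    root_in[of M1] root_in[of M2] by auto

lemma perm_match:
  assumes "\<forall>t\<in>set ts. \<forall>u. nested_label t = nested_label u \<longrightarrow> mtree_iso t u"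
    and "mset (map nested_label ts) = mset (map nested_label us)"
  shows "\<exists>us'. mset us' = mset us \<and> list_all2 mtree_iso ts us'"
  using assms
proof (induction ts arbitrary: us)
  case Nil then show ?case by simp
next
  case (Cons t ts)
  have "nested_label t \<in># mset (map nested_label us)" using Cons.prems(2)
    by (metis list.set_intros(1) list.simps(9) set_mset_mset)
  then obtain u where u: "u \<in> set us" "nested_label u = nested_label t" by auto
  have "mset (map nested_label (remove1 u us)) = mset (map nested_label us) - {#nested_label u#}"
    using u(1) by (simp add: image_mset_Diff)
  also have "\<dots> = mset (map nested_label ts)"
  proof -
    have eq: "mset (map nested_label us) = add_mset (nested_label t) (mset (map nested_label ts))"
      using Cons.prems(2) by simp
    show ?thesis unfolding eq u(2) by simp
  qed
  finally have m: "mset (map nested_label ts) = mset (map nested_label (remove1 u us))" by simp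
  have pr: "\<forall>t\<in>set ts. \<forall>u. nested_label t = nested_label u \<longrightarrow> mtree_iso t u"
    using Cons.prems(1) by simp
  have "\<exists>us'. mset us' = mset (remove1 u us) \<and> list_all2 mtree_iso ts us'"
    by (rule Cons.IH[OF pr m])
  then obtain us0 where us0: "mset us0 = mset (remove1 u us)" "list_all2 mtree_iso ts us0"
    by blast
  have i: "mtree_iso t u" using Cons.prems(1) u(2) by simp
  have ms: "mset (u # us0) = mset us" using us0(1) u(1) by simp
  have la: "list_all2 mtree_iso (t # ts) (u # us0)" using i us0(2) by simp
  show ?case using ms la by blast
qed

lemma label_iso: "nested_label A = nested_label B \<Longrightarrow> mtree_iso A B"
proof (induction A arbitrary: B)
  case (Leaf A) then show ?case by (cases B) (auto intro: iso_leaf)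
next
  case (Node ts)
  obtain us where B: "B = Node us" using Node.prems by (cases B) auto
  have "mset (map nested_label ts) = mset (map nested_label us)" using Node.prems B by simp
  moreover have "\<forall>t\<in>set ts. \<forall>u. nested_label t = nested_label u \<longrightarrow> mtree_iso t u"
    using Node.IH by blast
  ultimately have "\<exists>us'. mset us' = mset us \<and> list_all2 mtree_iso ts us'"
    using perm_match by blast
  then obtain us' where u1: "mset us' = mset us" and u2: "list_all2 mtree_iso ts us'"
    by blast
  have "mtree_iso (Node ts) (Node us)" by (rule iso_node[OF u1 u2])
  then show ?case using B by simp
qed

lemma sum_list_perm: "mset xs = mset ys \<Longrightarrow> sum_list (map (f :: _ \<Rightarrow> _ :: comm_monoid_add) xs) = sum_list (map f ys)"
proof -
  assume h: "mset xs = mset ys"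
  have "sum_list (map f xs) = sum_mset (image_mset f (mset xs))" by (metis mset_map sum_mset_sum_list)
  also have "\<dots> = sum_mset (image_mset f (mset ys))" using h by simp
  also have "\<dots> = sum_list (map f ys)" by (metis mset_map sum_mset_sum_list)
  finally show ?thesis .
qed

lemma iso_props: "mtree_iso A B \<Longrightarrow> nested_label A = nested_label B \<and> Upsilon A = Upsilon B"
proof (induction rule: mtree_iso.induct)
  case (iso_leaf A) then show ?case by simp
next
  case (iso_node us' us ts)
  have e1: "map nested_label ts = map nested_label us'" and e2: "map Upsilon ts = map Upsilon us'"
    using iso_node.IH by (induction rule: list_all2_induct; simp)+
  have "mset (map nested_label us') = mset (map nested_label us)"
    using iso_node.hyps(1) by (simp only: mset_map)
  then have n: "nested_label (Node ts) = nested_label (Node us)" using e1 by simp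
  have "sum_list (map Upsilon us') = sum_list (map Upsilon us)"
    by (rule sum_list_perm[OF iso_node.hyps(1)])
  then have "sum_list (map Upsilon ts) = sum_list (map Upsilon us)" using e2 by simp
  then have "Upsilon (Node ts) = Upsilon (Node us)" using n by simp
  then show ?case using n by blast
qed

lemma iso_iff: "mtree_iso A B \<longleftrightarrow> Upsilon A = Upsilon B"
proof
  assume "mtree_iso A B" then show "Upsilon A = Upsilon B" using iso_props by blast
next
  assume "Upsilon A = Upsilon B"
  then have "nested_label A = nested_label B" by (rule Upsilon_eq_root)
  then show "mtree_iso A B" by (rule label_iso)
qed

lemma tri_sub: "(A::'b multiset) - C \<subseteq># (A - B) + (B - C)"
  by (simp add: subseteq_mset_def) linarith

lemma tri_size: "size ((A::'b multiset) - C) \<le> size (A - B) + size (B - C)"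
proof -
  have "size (A - C) \<le> size ((A - B) + (B - C))" by (rule size_mset_mono[OF tri_sub])
  then show ?thesis by (simp only: size_union)
qed

theorem proposition6:
  fixes S :: "'a set" and M1 M2 :: "'a multree"
  assumes "finite S" and "mtree_wf S M1" and "mtree_wf S M2"
    and "Upsilon M1 = Upsilon M2"
  shows "mtree_iso M1 M2 \<and>
    (\<forall>A A' B C. mtree_wf S A \<and> mtree_wf S A' \<and> mtree_wf S B \<and> mtree_wf S C \<longrightarrow>
        (mtree_iso A A' \<longrightarrow> mul_dist A B = mul_dist A' B)
      \<and> mul_dist A B \<ge> 0
      \<and> (mul_dist A B = 0 \<longleftrightarrow> mtree_iso A B)
      \<and> mul_dist A B = mul_dist B A
      \<and> mul_dist A C \<le> mul_dist A B + mul_dist B C)"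
proof -
  have tri: "mul_dist A C \<le> mul_dist A B + mul_dist B C" for A B C :: "'a multree"
  proof -
    let ?a = "Upsilon A" and ?b = "Upsilon B" and ?c = "Upsilon C"
    have "size (?a - ?c) \<le> size (?a - ?b) + size (?b - ?c)"
      by (rule tri_size)
    moreover have "size (?c - ?a) \<le> size (?c - ?b) + size (?b - ?a)"
      by (rule tri_size)
    ultimately have "size (?a - ?c) + size (?c - ?a) \<le> (size (?a - ?b) + size (?b - ?a)) + (size (?b - ?c) + size (?c - ?b))" by linarith
    then have "real (size (?a - ?c) + size (?c - ?a)) \<le> real (size (?a - ?b) + size (?b - ?a)) + real (size (?b - ?c) + size (?c - ?b))" by linarith
    then show ?thesis by (simp add: mul_dist_def msym_diff_def field_simps)
  qed
  have z: "mul_dist A B = 0 \<longleftrightarrow> mtree_iso A B" for A B :: "'a multree"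
  proof -
    have "mul_dist A B = 0 \<longleftrightarrow> Upsilon A - Upsilon B = {#} \<and> Upsilon B - Upsilon A = {#}"
    proof -
      have "\<And>X Y :: 'a nlabel multiset. real (size X) + real (size Y) = 0 \<longleftrightarrow> X = {#} \<and> Y = {#}"
        by (metis add_nonneg_eq_0_iff of_nat_0_eq_iff of_nat_0_le_iff size_eq_0_iff_empty)
      then show ?thesis by (simp add: mul_dist_def msym_diff_def)
    qed
    also have "\<dots> \<longleftrightarrow> Upsilon A = Upsilon B"
      by (metis Diff_eq_empty_iff_mset subset_mset.antisym subset_mset.order_refl)
    finally show ?thesis using iso_iff[of A B] by blast
  qed
  have sym: "mul_dist A B = mul_dist B A" for A B :: "'a multree"
    by (simp add: mul_dist_def msym_diff_def add.commute)
  have inv: "mtree_iso A A' \<Longrightarrow> mul_dist A B = mul_dist A' B" for A A' B :: "'a multree"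
    using iso_iff[of A A'] by (simp add: mul_dist_def)
  show ?thesis
  proof (intro conjI allI impI)
    show "mtree_iso M1 M2" using assms(4) iso_iff by blast
  next
    fix A B :: "'a multree"
    show "0 \<le> mul_dist A B" by (simp add: mul_dist_def)
  next
    fix A A' B :: "'a multree" assume "mtree_iso A A'"
    then show "mul_dist A B = mul_dist A' B" by (rule inv)
  next
    fix A B :: "'a multree"
    show "mul_dist A B = mul_dist B A" by (rule sym)
  next
    fix A B :: "'a multree"
    show "mul_dist A B = 0 \<longleftrightarrow> mtree_iso A B" by (rule z)
  next
    fix A B C :: "'a multree"
    show "mul_dist A C \<le> mul_dist A B + mul_dist B C" by (rule tri)
  qed
qed
end
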